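(* Let $n,m$ be positive integers and $\pi\in S_n$. Then $x_m(\pi)=\dfrac{\Omega_\pi(m)}{(2m+1)^n}$, $x^*_m(\pi)=\dfrac{\Omega^*_\pi(m)}{(2m)^n}$, $x^+_m(\pi)=\dfrac{\Omega^+_\pi(m)}{m^n}$, and moreover $y_m(\pi)=x_m(\pi^{-1})$, $y^*_m(\pi)=x^*_m(\pi^{-1})$, $y^+_m(\pi)=x^+_m(\pi^{-1})$.
   Context: Integers are written with $\bar i=-i$, ordered $0<_{\mathbb Z}\bar1<_{\mathbb Z}1<_{\mathbb Z}\bar2<_{\mathbb Z}2<_{\mathbb Z}\cdots$, $|\bar j|=j$. Write $a\prec_+ b$ if $a<_{\mathbb Z}b$ or $a=b\in\{0,1,2,\ldots\}$, and $a\prec_- b$ if $a<_{\mathbb Z}b$ or $a=b\in\{\bar1,\bar2,\ldots\}$. For $\pi\in S_n$, a $\pi$-partition is $f:[n]\to\mathbb Z$ with, for each $1\le i<n$, $f(\pi(i))\prec_+ f(\pi(i+1))$ if $\pi(i)<\pi(i+1)$ and $f(\pi(i))\prec_- f(\pi(i+1))$ if $\pi(i)>\pi(i+1)$. $\Omega_\pi(m)$ counts $\pi$-partitions with $|f(i)|\le m$; $\Omega^*_\pi(m)$ counts those also never equal to $0$; $\Omega^+_\pi(m)$ counts those with values in $\{1,\ldots,m\}$. Shelf shufflers: a deck of cards labeled $1,\ldots,n$ top to bottom; cards are taken in order $1,\ldots,n$, each independently placed. Lazy mode: each card chooses uniformly among $2m+1$ options: shelf $0$ (placed below the cards already there), or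 shelf $j\in\{1,\ldots,m\}$ on top of, or below, the cards already there. Standard mode: same without shelf $0$ ($2m$ options). Strict mode: uniformly one of shelves $1,\ldots,m$, always placed below the cards already there. Finally piles are stacked with shelf $0$ (if present) on top, then shelf $1$, ..., shelf $m$; the result is the permutation $\pi$ with $\pi(i)$ the card in position $i$ from the top. $x_m(\pi),x^*_m(\pi),x^+_m(\pi)$ are the probabilities of obtaining $\pi$ in lazy, standard, strict mode. Riffle shuffles: for a weak composition $A$ of $n$ into $r$ parts, chosen with multinomial probability $\binom{n}{A}/r^n$, cut the deck $1,\ldots,n$ into consecutive piles of these sizes, then interleave the piles, each of the $\binom nA$ interleavings (keeping each pile's internal order) being equally likely; $\pi(i)$ is the card in position $i$. Classic $m$-riffle: $r=m$, no piles reversed. Down-up $m$-riffle: $r=2m$, piles $1,3,5,\ldots$ reversed. Up-down $m$-riffle: $r=2m+1$, piles $2,4,6,\ldots$ reversed. $y^+_m(\pi)$, $y^*_m(\pi)$, $y_m(\pi)$ denote the probabilities of obtaining $\pi$ from a classic, down-up, up-down $m$-riffle shuffle respectively. *)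

theory Defs
  imports "HOL-Combinatorics.Permutations" "HOL-Library.FuncSet" Complex_Main
begin

text \<open>Rank realising the order 0 < -1 < 1 < -2 < 2 < ... .\<close>
definition zrank :: "int \<Rightarrow> nat" where
  "zrank a = (if a = 0 then 0 else if a < 0 then 2 * nat (-a) - 1 else 2 * nat a)"

definition zless :: "int \<Rightarrow> int \<Rightarrow> bool" where
  "zless a b \<longleftrightarrow> zrank a < zrank b"

definition prec_plus :: "int \<Rightarrow> int \<Rightarrow> bool" where
  "prec_plus a b \<longleftrightarrow> zless a b \<or> (a = b \<and> a \<ge> 0)"

definition prec_minus :: "int \<Rightarrow> int \<Rightarrow> bool" where
  "prec_minus a b \<longleftrightarrow> zless a b \<or> (a = b \<and> a < 0)"

definition is_pi_partition :: "nat \<Rightarrow> (nat \<Rightarrow> nat) \<Rightarrow> (nat \<Rightarrow> int) \<Rightarrow> bool" where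
  "is_pi_partition n \<pi> f \<longleftrightarrow>
     (\<forall>i. 1 \<le> i \<and> i < n \<longrightarrow>
        (\<pi> i < \<pi> (i+1) \<longrightarrow> prec_plus (f (\<pi> i)) (f (\<pi> (i+1)))) \<and>
        (\<pi> i > \<pi> (i+1) \<longrightarrow> prec_minus (f (\<pi> i)) (f (\<pi> (i+1)))))"

definition Omega :: "nat \<Rightarrow> (nat \<Rightarrow> nat) \<Rightarrow> nat \<Rightarrow> nat" where
  "Omega n \<pi> m = card {f \<in> {1..n} \<rightarrow>\<^sub>E {-int m..int m}. is_pi_partition n \<pi> f}"

definition Omega_star :: "nat \<Rightarrow> (nat \<Rightarrow> nat) \<Rightarrow> nat \<Rightarrow> nat" where
  "Omega_star n \<pi> m = card {f \<in> {1..n} \<rightarrow>\<^sub>E ({-int m..int m} - {0}). is_pi_partition n \<pi> f}"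

definition Omega_plus :: "nat \<Rightarrow> (nat \<Rightarrow> nat) \<Rightarrow> nat \<Rightarrow> nat" where
  "Omega_plus n \<pi> m = card {f \<in> {1..n} \<rightarrow>\<^sub>E {1..int m}. is_pi_partition n \<pi> f}"

text \<open>A choice for a card is a pair (shelf, on_top). Shelf 0 only with on_top = False
  (placed below). on_top = True: placed on top of the cards already on the shelf.\<close>

definition lazy_opts :: "nat \<Rightarrow> (nat \<times> bool) set" where
  "lazy_opts m = {(0, False)} \<union> ({1..m} \<times> UNIV)"

definition std_opts :: "nat \<Rightarrow> (nat \<times> bool) set" where
  "std_opts m = {1..m} \<times> UNIV"

definition strict_opts :: "nat \<Rightarrow> (nat \<times> bool) set" where
  "strict_opts m = {1..m} \<times> {False}"

definition shelf_step :: "(nat \<Rightarrow> nat \<times> bool) \<Rightarrow> (nat \<Rightarrow> nat list) \<Rightarrow> nat \<Rightarrow> (nat \<Rightarrow> nat list)" where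
  "shelf_step c sh k = (case c k of (j, t) \<Rightarrow> sh(j := (if t then k # sh j else sh j @ [k])))"

text \<open>Cards 1..n are processed in order; finally shelves 0,1,...,m are stacked top to bottom.\<close>
definition shelf_deck :: "nat \<Rightarrow> nat \<Rightarrow> (nat \<Rightarrow> nat \<times> bool) \<Rightarrow> nat list" where
  "shelf_deck n m c = concat (map (foldl (shelf_step c) (\<lambda>_. []) [1..<n+1]) [0..<m+1])"

text \<open>The permutation pi as the deck list (pi 1, ..., pi n), top to bottom.\<close>
definition perm_list :: "nat \<Rightarrow> (nat \<Rightarrow> nat) \<Rightarrow> nat list" where
  "perm_list n \<pi> = map \<pi> [1..<n+1]"

definition shelf_prob :: "(nat \<times> bool) set \<Rightarrow> nat \<Rightarrow> nat \<Rightarrow> (nat \<Rightarrow> nat) \<Rightarrow> real" where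
  "shelf_prob opts n m \<pi> =
     real (card {c \<in> {1..n} \<rightarrow>\<^sub>E opts. shelf_deck n m c = perm_list n \<pi>}) / real (card opts) ^ n"

definition x_lazy :: "nat \<Rightarrow> nat \<Rightarrow> (nat \<Rightarrow> nat) \<Rightarrow> real" where
  "x_lazy n m \<pi> = shelf_prob (lazy_opts m) n m \<pi>"

definition x_std :: "nat \<Rightarrow> nat \<Rightarrow> (nat \<Rightarrow> nat) \<Rightarrow> real" where
  "x_std n m \<pi> = shelf_prob (std_opts m) n m \<pi>"

definition x_strict :: "nat \<Rightarrow> nat \<Rightarrow> (nat \<Rightarrow> nat) \<Rightarrow> real" where
  "x_strict n m \<pi> = shelf_prob (strict_opts m) n m \<pi>"

definition weak_comps :: "nat \<Rightarrow> nat \<Rightarrow> nat list set" where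
  "weak_comps n r = {A. length A = r \<and> sum_list A = n}"

definition multinom :: "nat \<Rightarrow> nat list \<Rightarrow> nat" where
  "multinom n A = fact n div prod_list (map fact A)"

definition pile :: "(nat \<Rightarrow> bool) \<Rightarrow> nat list \<Rightarrow> nat \<Rightarrow> nat list" where
  "pile rv A i = (let s = sum_list (take i A); p = [s+1..<s + A ! i + 1]
                  in if rv i then rev p else p)"

definition piles :: "(nat \<Rightarrow> bool) \<Rightarrow> nat list \<Rightarrow> nat list list" where
  "piles rv A = map (pile rv A) [0..<length A]"

definition interleavings :: "nat list list \<Rightarrow> nat list set" where
  "interleavings Ls = foldr (\<lambda>xs S. \<Union>ys\<in>S. shuffles xs ys) Ls {[]}"

definition riffle_prob :: "nat \<Rightarrow> (nat \<Rightarrow> bool) \<Rightarrow> nat \<Rightarrow> (nat \<Rightarrow> nat) \<Rightarrow> real" where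
  "riffle_prob r rv n \<pi> =
     (\<Sum>A\<in>weak_comps n r. (real (multinom n A) / real r ^ n) *
        ((if perm_list n \<pi> \<in> interleavings (piles rv A) then 1 else 0)
          / real (card (interleavings (piles rv A)))))"

text \<open>Classic: r = m, no pile reversed. Down-up: r = 2m, piles 1,3,5,... (1-indexed)
  reversed, i.e. 0-indexed even. Up-down: r = 2m+1, piles 2,4,6,... reversed, i.e.
  0-indexed odd.\<close>
definition y_plus :: "nat \<Rightarrow> nat \<Rightarrow> (nat \<Rightarrow> nat) \<Rightarrow> real" where
  "y_plus n m \<pi> = riffle_prob m (\<lambda>_. False) n \<pi>"

definition y_star :: "nat \<Rightarrow> nat \<Rightarrow> (nat \<Rightarrow> nat) \<Rightarrow> real" where
  "y_star n m \<pi> = riffle_prob (2*m) (\<lambda>i. even i) n \<pi>"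

definition y_lazy :: "nat \<Rightarrow> nat \<Rightarrow> (nat \<Rightarrow> nat) \<Rightarrow> real" where
  "y_lazy n m \<pi> = riffle_prob (2*m+1) (\<lambda>i. odd i) n \<pi>"

end

theory Submission
  imports Defs "HOL-Library.Product_Lexorder"
begin


declare upt_Suc[simp del]

lemma zrank_pos: "zrank (int n) = 2 * n" by (simp add: zrank_def)
lemma zrank_neg: "zrank (- int (Suc n)) = 2 * n + 1" by (simp add: zrank_def nat_add_distrib)
lemma zrank_inj: "zrank a = zrank b \<Longrightarrow> a = b"
  by (cases a rule: int_cases; cases b rule: int_cases) (simp_all only: zrank_pos zrank_neg; presburger)+

lemma sorted_unique_key:
  fixes \<kappa> :: "'a \<Rightarrow> 'b::linorder"
  assumes "sorted_wrt (\<lambda>x y. \<kappa> x < \<kappa> y) xs" "sorted_wrt (\<lambda>x y. \<kappa> x < \<kappa> y) ys"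
    "set xs = set ys" "inj_on \<kappa> (set xs)"
  shows "xs = ys"
proof -
  have "sorted_wrt (<) (map \<kappa> xs)" "sorted_wrt (<) (map \<kappa> ys)" using assms by (simp_all add: sorted_wrt_map)
  hence "map \<kappa> xs = map \<kappa> ys" using assms(3) by (intro sorted_distinct_set_unique) (auto simp: strict_sorted_iff)
  thus ?thesis using assms(3,4) inj_on_map_eq_map by (metis sup.idem)
qed

lemma sorted_wrt_map_upt_adj:
  assumes "transp R"
  shows "sorted_wrt R (map g [a..<b]) \<longleftrightarrow> (\<forall>k. a \<le> k \<and> Suc k < b \<longrightarrow> R (g k) (g (Suc k)))"
  unfolding sorted_wrt_iff_nth_Suc_transp[OF assms]
proof safe
  fix k assume H: "\<forall>i. Suc i < length (map g [a..<b]) \<longrightarrow> R (map g [a..<b] ! i) (map g [a..<b] ! Suc i)"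
    "a \<le> k" "Suc k < b"
  from H(1)[rule_format, of "k - a"] H(2,3) show "R (g k) (g (Suc k))" by (simp add: Suc_diff_le)
next
  fix i assume H: "\<forall>k. a \<le> k \<and> Suc k < b \<longrightarrow> R (g k) (g (Suc k))" "Suc i < length (map g [a..<b])"
  from H(1)[rule_format, of "a + i"] H(2) show "R (map g [a..<b] ! i) (map g [a..<b] ! Suc i)" by simp
qed

lemma foldl_shelf: "foldl (shelf_step c) (\<lambda>_. []) xs =
   (\<lambda>j. rev (filter (\<lambda>i. c i = (j,True)) xs) @ filter (\<lambda>i. c i = (j,False)) xs)"
proof (induction xs rule: rev_induct)
  case Nil thus ?case by simp
next
  case (snoc x xs)
  show ?case unfolding foldl_append foldl.simps snoc.IH
    by (rule ext) (auto simp: shelf_step_def split: prod.split)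
qed

definition enc :: "nat \<times> bool \<Rightarrow> int" where "enc p = (if snd p then - int (fst p) else int (fst p))"

definition ckey :: "(nat \<Rightarrow> int) \<Rightarrow> nat \<Rightarrow> nat \<times> int" where
  "ckey f x = (zrank (f x), if f x < 0 then - int x else int x)"

lemma ckey_inj: "inj_on (ckey f) A"
  by (rule inj_onI) (auto simp: ckey_def split: if_splits dest: zrank_inj)

lemma transp_ckey: "transp (\<lambda>x y. ckey f x < ckey f y)"
  by (rule transpI) auto

lemma zrank_enc: "p \<noteq> (0,True) \<Longrightarrow> zrank (enc p) \<le> 2 * fst p \<and> 2 * fst p \<le> zrank (enc p) + 1"
  by (cases p) (auto simp: zrank_def enc_def)

lemma sorted_wrt_concat_blocks:
  assumes "\<And>j. j < k \<Longrightarrow> sorted_wrt R (B j)"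
  and "\<And>j j' x y. j < j' \<Longrightarrow> j' < k \<Longrightarrow> x \<in> set (B j) \<Longrightarrow> y \<in> set (B j') \<Longrightarrow> R x y"
  shows "sorted_wrt R (concat (map B [0..<k]))"
  using assms by (induction k) (auto simp: sorted_wrt_append upt_Suc_append)

lemma deck_eq: "shelf_deck n m c = concat (map (\<lambda>j. rev (filter (\<lambda>i. c i = (j,True)) [1..<n+1]) @ filter (\<lambda>i. c i = (j,False)) [1..<n+1]) [0..<m+1])"
  unfolding shelf_deck_def foldl_shelf ..

lemma deck_sorted:
  assumes valid: "\<And>x. x \<in> {1..n} \<Longrightarrow> fst (c x) \<le> m \<and> c x \<noteq> (0,True)"
  shows "sorted_wrt (\<lambda>x y. ckey (enc \<circ> c) x < ckey (enc \<circ> c) y) (shelf_deck n m c)"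
  unfolding deck_eq
proof (rule sorted_wrt_concat_blocks)
  fix j assume "j < m + 1"
  have L: "sorted_wrt (<) [1..<n+1]" by (rule sorted_wrt_upt)
  show "sorted_wrt (\<lambda>x y. ckey (enc \<circ> c) x < ckey (enc \<circ> c) y)
          (rev (filter (\<lambda>i. c i = (j, True)) [1..<n + 1]) @ filter (\<lambda>i. c i = (j, False)) [1..<n + 1])"
    unfolding sorted_wrt_append sorted_wrt_rev
  proof (intro conjI ballI)
    show "sorted_wrt (\<lambda>x y. ckey (enc \<circ> c) y < ckey (enc \<circ> c) x) (filter (\<lambda>i. c i = (j, True)) [1..<n + 1])"
    proof (rule sorted_wrt_mono_rel[OF _ sorted_wrt_filter[OF L]])
      fix x y assume "x \<in> set (filter (\<lambda>i. c i = (j, True)) [1..<n + 1])" "y \<in> set (filter (\<lambda>i. c i = (j, True)) [1..<n + 1])" "x < y"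
      hence "c x = (j,True)" "c y = (j,True)" "x \<in> {1..n}" "x < y" by auto
      with valid[of x] show "ckey (enc \<circ> c) y < ckey (enc \<circ> c) x" by (auto simp: ckey_def enc_def)
    qed
    show "sorted_wrt (\<lambda>x y. ckey (enc \<circ> c) x < ckey (enc \<circ> c) y) (filter (\<lambda>i. c i = (j, False)) [1..<n + 1])"
      by (rule sorted_wrt_mono_rel[OF _ sorted_wrt_filter[OF L]]) (auto simp: ckey_def enc_def)
    fix x y assume "x \<in> set (rev (filter (\<lambda>i. c i = (j, True)) [1..<n + 1]))" "y \<in> set (filter (\<lambda>i. c i = (j, False)) [1..<n + 1])"
    hence "c x = (j,True)" "c y = (j,False)" "x \<in> {1..n}" by auto
    with valid[of x] have "j \<noteq> 0" by auto
    with \<open>c x = _\<close> \<open>c y = _\<close> show "ckey (enc \<circ> c) x < ckey (enc \<circ> c) y"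
      by (auto simp: ckey_def enc_def zrank_def)
  qed
next
  fix j j' x y assume A: "j < j'" "j' < m + 1"
    "x \<in> set (rev (filter (\<lambda>i. c i = (j, True)) [1..<n + 1]) @ filter (\<lambda>i. c i = (j, False)) [1..<n + 1])"
    "y \<in> set (rev (filter (\<lambda>i. c i = (j', True)) [1..<n + 1]) @ filter (\<lambda>i. c i = (j', False)) [1..<n + 1])"
  hence "fst (c x) = j" "fst (c y) = j'" "x \<in> {1..n}" "y \<in> {1..n}" by auto
  with valid zrank_enc[of "c x"] zrank_enc[of "c y"] A(1)
  have "zrank (enc (c x)) < zrank (enc (c y))" by fastforce
  thus "ckey (enc \<circ> c) x < ckey (enc \<circ> c) y" by (simp add: ckey_def)
qed


lemma deck_set:
  assumes valid: "\<And>x. x \<in> {1..n} \<Longrightarrow> fst (c x) \<le> m \<and> c x \<noteq> (0,True)"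
  shows "set (shelf_deck n m c) = {1..n}"
proof
  show "set (shelf_deck n m c) \<subseteq> {1..n}" by (auto simp: deck_eq)
  show "{1..n} \<subseteq> set (shelf_deck n m c)"
  proof
    fix x assume x: "x \<in> {1..n}"
    obtain j t where jt: "c x = (j,t)" by (cases "c x")
    with valid[OF x] have "j \<le> m" by auto
    with jt x show "x \<in> set (shelf_deck n m c)"
      by (cases t) (auto simp: deck_eq intro!: bexI[of _ j])
  qed
qed

lemma perm_list_set: "\<pi> permutes {1..n} \<Longrightarrow> set (perm_list n \<pi>) = {1..n}"
  unfolding perm_list_def by (simp add: atLeastLessThanSuc_atLeastAtMost permutes_image)

lemma key_prec:
  assumes "a \<noteq> b"
  shows "ckey f a < ckey f b \<longleftrightarrow> (a < b \<longrightarrow> prec_plus (f a) (f b)) \<and> (b < a \<longrightarrow> prec_minus (f a) (f b))"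
proof (cases "f a = f b")
  case True thus ?thesis using assms by (auto simp: ckey_def prec_plus_def prec_minus_def zless_def)
next
  case False
  hence "zrank (f a) \<noteq> zrank (f b)" using zrank_inj by metis
  thus ?thesis using assms False by (auto simp: ckey_def prec_plus_def prec_minus_def zless_def)
qed

lemma pp_iff_sorted:
  assumes perm: "\<pi> permutes {1..n}"
  shows "is_pi_partition n \<pi> f \<longleftrightarrow> sorted_wrt (\<lambda>x y. ckey f x < ckey f y) (perm_list n \<pi>)"
proof -
  have inj: "inj \<pi>" using permutes_inj[OF perm] .
  have "sorted_wrt (\<lambda>x y. ckey f x < ckey f y) (perm_list n \<pi>) \<longleftrightarrow>
     (\<forall>k. 1 \<le> k \<and> Suc k < n + 1 \<longrightarrow> ckey f (\<pi> k) < ckey f (\<pi> (Suc k)))"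
    unfolding perm_list_def by (rule sorted_wrt_map_upt_adj[OF transp_ckey])
  also have "\<dots> \<longleftrightarrow> is_pi_partition n \<pi> f"
    unfolding is_pi_partition_def
  proof (intro iff_allI)
    fix k
    have "\<pi> k \<noteq> \<pi> (Suc k)" using inj by (auto dest: injD)
    thus "(1 \<le> k \<and> Suc k < n + 1 \<longrightarrow> ckey f (\<pi> k) < ckey f (\<pi> (Suc k))) \<longleftrightarrow>
      (1 \<le> k \<and> k < n \<longrightarrow> (\<pi> k < \<pi> (k + 1) \<longrightarrow> prec_plus (f (\<pi> k)) (f (\<pi> (k + 1)))) \<and>
          (\<pi> (k + 1) < \<pi> k \<longrightarrow> prec_minus (f (\<pi> k)) (f (\<pi> (k + 1)))))"
      using key_prec[of "\<pi> k" "\<pi> (Suc k)" f] by auto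
  qed
  finally show ?thesis ..
qed

lemma deck_iff:
  assumes valid: "\<And>x. x \<in> {1..n} \<Longrightarrow> fst (c x) \<le> m \<and> c x \<noteq> (0,True)"
   and perm: "\<pi> permutes {1..n}"
  shows "shelf_deck n m c = perm_list n \<pi> \<longleftrightarrow> is_pi_partition n \<pi> (enc \<circ> c)"
proof -
  have ds: "sorted_wrt (\<lambda>x y. ckey (enc \<circ> c) x < ckey (enc \<circ> c) y) (shelf_deck n m c)"
    by (rule deck_sorted) (rule valid)
  have dset: "set (shelf_deck n m c) = {1..n}" by (rule deck_set) (rule valid)
  show ?thesis unfolding pp_iff_sorted[OF perm]
  proof
  assume eq: "shelf_deck n m c = perm_list n \<pi>"
  show "sorted_wrt (\<lambda>x y. ckey (enc \<circ> c) x < ckey (enc \<circ> c) y) (perm_list n \<pi>)"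
    using ds eq by (simp only:)
next
  assume s: "sorted_wrt (\<lambda>x y. ckey (enc \<circ> c) x < ckey (enc \<circ> c) y) (perm_list n \<pi>)"
  show "shelf_deck n m c = perm_list n \<pi>"
    by (rule sorted_unique_key[where \<kappa>="ckey (enc \<circ> c)", OF ds s])
       (simp_all only: dset perm_list_set[OF perm] ckey_inj)
  qed
qed

lemma card_bij_filter:
  assumes "bij_betw h A B" shows "card {a\<in>A. P (h a)} = card {b\<in>B. P b}"
proof -
  have "{b\<in>B. P b} = h ` {a\<in>A. P (h a)}" using assms by (auto simp: bij_betw_def)
  moreover have "inj_on h {a\<in>A. P (h a)}" using assms by (auto simp: bij_betw_def intro: inj_on_subset)
  ultimately show ?thesis by (simp add: card_image)
qed

lemma bij_PiE_gen:
  assumes tau: "bij_betw \<tau> I I" and g: "inj_on g Op" "g ` Op = V"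
  shows "bij_betw (\<lambda>p. restrict (\<lambda>x. g (p (\<tau> x))) I) (I \<rightarrow>\<^sub>E Op) (I \<rightarrow>\<^sub>E V)"
proof (rule bij_betw_byWitness[where f'="\<lambda>f. restrict (\<lambda>k. the_inv_into Op g (f (inv_into I \<tau> k))) I"])
  have tI: "\<And>x. x \<in> I \<Longrightarrow> \<tau> x \<in> I" and iI: "\<And>x. x \<in> I \<Longrightarrow> inv_into I \<tau> x \<in> I"
    and tinv: "\<And>x. x \<in> I \<Longrightarrow> \<tau> (inv_into I \<tau> x) = x" and invt: "\<And>x. x \<in> I \<Longrightarrow> inv_into I \<tau> (\<tau> x) = x"
    using tau by (auto simp: bij_betw_def inv_into_into f_inv_into_f inv_into_f_f)
  show "\<forall>a\<in>I \<rightarrow>\<^sub>E Op. restrict (\<lambda>k. the_inv_into Op g (restrict (\<lambda>x. g (a (\<tau> x))) I (inv_into I \<tau> k))) I = a"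
  proof
    fix a assume a: "a \<in> I \<rightarrow>\<^sub>E Op"
    show "restrict (\<lambda>k. the_inv_into Op g (restrict (\<lambda>x. g (a (\<tau> x))) I (inv_into I \<tau> k))) I = a"
    proof
      fix x show "restrict (\<lambda>k. the_inv_into Op g (restrict (\<lambda>x. g (a (\<tau> x))) I (inv_into I \<tau> k))) I x = a x"
        using a iI tinv the_inv_into_f_f[OF g(1)] by (cases "x \<in> I") (auto simp: PiE_def extensional_def)
    qed
  qed
  show "\<forall>a\<in>I \<rightarrow>\<^sub>E V. restrict (\<lambda>x. g (restrict (\<lambda>k. the_inv_into Op g (a (inv_into I \<tau> k))) I (\<tau> x))) I = a"
  proof
    fix a assume a: "a \<in> I \<rightarrow>\<^sub>E V"
    show "restrict (\<lambda>x. g (restrict (\<lambda>k. the_inv_into Op g (a (inv_into I \<tau> k))) I (\<tau> x))) I = a"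
    proof
      fix x show "restrict (\<lambda>x. g (restrict (\<lambda>k. the_inv_into Op g (a (inv_into I \<tau> k))) I (\<tau> x))) I x = a x"
        using a tI invt f_the_inv_into_f[OF g(1)] g(2) PiE_mem[OF a] by (cases "x \<in> I") (auto simp: PiE_def extensional_def)
    qed
  qed
  show "(\<lambda>p. restrict (\<lambda>x. g (p (\<tau> x))) I) ` (I \<rightarrow>\<^sub>E Op) \<subseteq> I \<rightarrow>\<^sub>E V"
  proof (rule image_subsetI)
    fix p assume p: "p \<in> I \<rightarrow>\<^sub>E Op"
    show "restrict (\<lambda>x. g (p (\<tau> x))) I \<in> I \<rightarrow>\<^sub>E V" using tI PiE_mem[OF p] g(2) by auto
  qed
  show "(\<lambda>f. restrict (\<lambda>k. the_inv_into Op g (f (inv_into I \<tau> k))) I) ` (I \<rightarrow>\<^sub>E V) \<subseteq> I \<rightarrow>\<^sub>E Op"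
  proof (rule image_subsetI)
    fix f assume f: "f \<in> I \<rightarrow>\<^sub>E V"
    show "restrict (\<lambda>k. the_inv_into Op g (f (inv_into I \<tau> k))) I \<in> I \<rightarrow>\<^sub>E Op"
      using iI PiE_mem[OF f] g by (auto intro!: the_inv_into_into)
  qed
qed

lemma pp_cong:
  assumes perm: "\<pi> permutes {1..n}" and eq: "\<And>x. x \<in> {1..n} \<Longrightarrow> f x = g x"
  shows "is_pi_partition n \<pi> f = is_pi_partition n \<pi> g"
proof -
  have "\<And>i. 1 \<le> i \<Longrightarrow> i \<le> n \<Longrightarrow> f (\<pi> i) = g (\<pi> i)"
    using eq permutes_in_image[OF perm] by auto
  thus ?thesis unfolding is_pi_partition_def by (intro iff_allI) auto
qed

lemma enc_inj: assumes "(0,True) \<notin> Op" shows "inj_on enc Op"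
proof (rule inj_onI)
  fix x y assume xy: "x \<in> Op" "y \<in> Op" "enc x = enc y"
  obtain a b where x: "x = (a,b)" by (cases x)
  obtain c d where y: "y = (c,d)" by (cases y)
  show "x = y"
  proof (cases "b = d")
    case True thus ?thesis using xy x y by (auto simp: enc_def split: if_splits)
  next
    case False
    hence "a = 0 \<and> c = 0" using xy x y by (auto simp: enc_def split: if_splits)
    thus ?thesis using xy x y assms False by (cases b) auto
  qed
qed



lemma shelf_count:
  assumes opts: "\<And>p. p \<in> Op \<Longrightarrow> fst p \<le> m \<and> p \<noteq> (0,True)"
  and perm: "\<pi> permutes {1..n}"
  and V: "enc ` Op = V"
  shows "card {c \<in> {1..n} \<rightarrow>\<^sub>E Op. shelf_deck n m c = perm_list n \<pi>} = card {f \<in> {1..n} \<rightarrow>\<^sub>E V. is_pi_partition n \<pi> f}"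
proof -
  have bij: "bij_betw (\<lambda>p. restrict (\<lambda>x. enc (p (id x))) {1..n}) ({1..n} \<rightarrow>\<^sub>E Op) ({1..n} \<rightarrow>\<^sub>E V)"
    by (rule bij_PiE_gen[OF bij_betw_id enc_inj V]) (use opts in blast)
  have "{c \<in> {1..n} \<rightarrow>\<^sub>E Op. shelf_deck n m c = perm_list n \<pi>} =
        {c \<in> {1..n} \<rightarrow>\<^sub>E Op. is_pi_partition n \<pi> (restrict (\<lambda>x. enc (c (id x))) {1..n})}"
  proof (intro Collect_cong conj_cong refl)
    fix c assume c: "c \<in> {1..n} \<rightarrow>\<^sub>E Op"
    hence valid: "\<And>x. x \<in> {1..n} \<Longrightarrow> fst (c x) \<le> m \<and> c x \<noteq> (0,True)" using PiE_mem[OF c] opts by blast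
    show "shelf_deck n m c = perm_list n \<pi> \<longleftrightarrow> is_pi_partition n \<pi> (restrict (\<lambda>x. enc (c (id x))) {1..n})"
      using deck_iff[OF valid perm] pp_cong[OF perm, of "enc \<circ> c" "restrict (\<lambda>x. enc (c (id x))) {1..n}"] by simp
  qed
  thus ?thesis using card_bij_filter[OF bij, of "is_pi_partition n \<pi>"] by simp
qed



lemma interleavings_Nil[simp]: "interleavings [] = {[]}"
  by (simp add: interleavings_def)

lemma interleavings_Cons[simp]: "interleavings (L # Ls) = (\<Union>ys\<in>interleavings Ls. shuffles L ys)"
  by (simp add: interleavings_def)

lemma interleavings_char:
  "distinct (concat Ls) \<Longrightarrow> zs \<in> interleavings Ls \<longleftrightarrow>
     distinct zs \<and> set zs = set (concat Ls) \<and> (\<forall>L\<in>set Ls. filter (\<lambda>x. x \<in> set L) zs = L)"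
proof (induction Ls arbitrary: zs)
  case Nil
  show ?case by auto
next
  case (Cons L Ls)
  have dL: "distinct L" and dLs: "distinct (concat Ls)" and disj: "set L \<inter> set (concat Ls) = {}"
    using Cons.prems by auto
  show ?case
  proof
    assume "zs \<in> interleavings (L # Ls)"
    then obtain ys where ys: "ys \<in> interleavings Ls" and zs: "zs \<in> shuffles L ys" by auto
    from Cons.IH[OF dLs] ys have IH: "distinct ys" "set ys = set (concat Ls)"
      "\<forall>L'\<in>set Ls. filter (\<lambda>x. x \<in> set L') ys = L'" by auto
    have disj': "set L \<inter> set ys = {}" using disj IH(2) by simp
    have "distinct zs" using distinct_disjoint_shuffles[OF dL IH(1) disj' zs] .
    moreover have "set zs = set (concat (L # Ls))" using set_shuffles[OF zs] IH(2) by simp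
    moreover have "filter (\<lambda>x. x \<in> set L) zs = L" using filter_shuffles_disjoint1(1)[OF disj' zs] .
    moreover have "filter (\<lambda>x. x \<in> set L') zs = L'" if L': "L' \<in> set Ls" for L'
    proof -
      have "filter (\<lambda>x. x \<in> set L') zs \<in> shuffles (filter (\<lambda>x. x \<in> set L') L) (filter (\<lambda>x. x \<in> set L') ys)"
        using zs filter_shuffles[of "\<lambda>x. x \<in> set L'" L ys] by blast
      moreover have "filter (\<lambda>x. x \<in> set L') L = []"
        using disj L' by (auto simp: filter_empty_conv)
      ultimately show ?thesis using IH(3) L' by simp
    qed
    ultimately show "distinct zs \<and> set zs = set (concat (L # Ls)) \<and> (\<forall>L\<in>set (L # Ls). filter (\<lambda>x. x \<in> set L) zs = L)"
      by auto
  next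
    assume H: "distinct zs \<and> set zs = set (concat (L # Ls)) \<and> (\<forall>L\<in>set (L # Ls). filter (\<lambda>x. x \<in> set L) zs = L)"
    define ys where "ys = filter (\<lambda>x. \<not> x \<in> set L) zs"
    have "ys \<in> interleavings Ls"
      unfolding Cons.IH[OF dLs]
    proof (intro conjI ballI)
      show "distinct ys" using H by (simp add: ys_def)
      show "set ys = set (concat Ls)" using H disj by (auto simp: ys_def)
      fix L' assume L': "L' \<in> set Ls"
      have "filter (\<lambda>x. x \<in> set L') ys = filter (\<lambda>x. x \<in> set L') zs"
        unfolding ys_def filter_filter using disj L' by (intro filter_cong) auto
      thus "filter (\<lambda>x. x \<in> set L') ys = L'" using H L' by simp
    qed
    moreover have "zs \<in> shuffles L ys"
      using partition_in_shuffles[where P="\<lambda>x. x \<in> set L" and xs=zs] H by (simp add: ys_def)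
    ultimately show "zs \<in> interleavings (L # Ls)" by auto
  qed
qed

lemma finite_interleavings[simp]: "finite (interleavings Ls)"
  by (induction Ls) auto

lemma card_interleavings:
  "distinct (concat Ls) \<Longrightarrow>
    card (interleavings Ls) * prod_list (map (\<lambda>L. fact (length L)) Ls) = (fact (length (concat Ls)) :: nat)"
proof (induction Ls)
  case Nil thus ?case by simp
next
  case (Cons L Ls)
  have dL: "distinct L" and dLs: "distinct (concat Ls)" and disj: "set L \<inter> set (concat Ls) = {}"
    using Cons.prems by auto
  let ?N = "length (concat Ls)"
  have sh: "card (shuffles L ys) = (length L + ?N) choose length L" if ys: "ys \<in> interleavings Ls" for ys
  proof -
    have "distinct ys" "set ys = set (concat Ls)" using ys interleavings_char[OF dLs] by auto
    hence "length ys = ?N" using dLs by (metis distinct_card)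
    moreover have "set L \<inter> set ys = {}" using disj \<open>set ys = _\<close> by simp
    ultimately show ?thesis using card_disjoint_shuffles by metis
  qed
  have "card (interleavings (L # Ls)) = (\<Sum>ys\<in>interleavings Ls. card (shuffles L ys))"
    unfolding interleavings_Cons
  proof (rule card_UN_disjoint)
    show "\<forall>i\<in>interleavings Ls. \<forall>j\<in>interleavings Ls. i \<noteq> j \<longrightarrow> shuffles L i \<inter> shuffles L j = {}"
    proof (intro ballI impI)
      fix i j assume i: "i \<in> interleavings Ls" and j: "j \<in> interleavings Ls" and ij: "i \<noteq> j"
      have "set L \<inter> set i = {}" "set L \<inter> set j = {}" using i j disj interleavings_char[OF dLs] by auto
      thus "shuffles L i \<inter> shuffles L j = {}" using ij filter_shuffles_disjoint1(2) by blast
    qed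
  qed auto
  also have "\<dots> = card (interleavings Ls) * ((length L + ?N) choose length L)"
    using sh by simp
  finally have c: "card (interleavings (L # Ls)) = card (interleavings Ls) * ((length L + ?N) choose length L)" .
  have "card (interleavings (L # Ls)) * prod_list (map (\<lambda>L. fact (length L)) (L # Ls))
      = ((length L + ?N) choose length L) * fact (length L) * (card (interleavings Ls) * prod_list (map (\<lambda>L. fact (length L)) Ls))"
    unfolding c by (simp add: algebra_simps)
  also have "\<dots> = ((length L + ?N) choose length L) * fact (length L) * fact ?N" using Cons.IH[OF dLs] by simp
  also have "\<dots> = fact (length L + ?N)"
    using binomial_fact_lemma[of "length L" "length L + ?N"] by (simp add: algebra_simps)
  finally show ?case by simp
qed


definition S :: "nat list \<Rightarrow> nat \<Rightarrow> nat" where "S A i = sum_list (take i A)"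

lemma S0[simp]: "S A 0 = 0" by (simp add: S_def)
lemma S_Suc: "i < length A \<Longrightarrow> S A (Suc i) = S A i + A ! i"
  by (simp add: S_def take_Suc_conv_app_nth)
lemma S_len: "S A (length A) = sum_list A" by (simp add: S_def)
lemma S_mono: "i \<le> j \<Longrightarrow> S A i \<le> S A j"
proof -
  assume "i \<le> j"
  then obtain d where "j = i + d" using le_Suc_ex by blast
  thus ?thesis by (simp add: S_def take_add)
qed
lemma S_le: "length A = r \<Longrightarrow> S A i \<le> sum_list A"
  by (metis S_def append_take_drop_id le_add1 sum_list_append)

lemma pile_eq: "i < length A \<Longrightarrow> pile rv A i = (if rv i then rev [S A i + 1..<S A (Suc i) + 1] else [S A i + 1..<S A (Suc i) + 1])"
  by (simp add: pile_def Let_def S_Suc S_def[symmetric])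

lemma pile_set: "i < length A \<Longrightarrow> set (pile rv A i) = {S A i + 1..S A (Suc i)}"
  by (auto simp: pile_eq)
lemma pile_distinct: "i < length A \<Longrightarrow> distinct (pile rv A i)"
  by (auto simp: pile_eq)
lemma pile_length: "i < length A \<Longrightarrow> length (pile rv A i) = A ! i"
  by (auto simp: pile_eq S_Suc)

lemma piles_prefix: "k \<le> length A \<Longrightarrow>
   set (concat (map (pile rv A) [0..<k])) = {1..S A k} \<and> distinct (concat (map (pile rv A) [0..<k]))"
proof (induction k)
  case 0 thus ?case by simp
next
  case (Suc k)
  hence k: "k < length A" by simp
  have "S A k \<le> S A (Suc k)" by (rule S_mono) simp
  hence "{1..S A k} \<union> {S A k + 1..S A (Suc k)} = {1..S A (Suc k)}" by auto
  thus ?case using Suc.IH k pile_set[OF k, of rv] pile_distinct[OF k, of rv]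
    by (auto simp: upt_Suc_append)
qed

lemma piles_concat:
  assumes "A \<in> weak_comps n r"
  shows "set (concat (piles rv A)) = {1..n}" "distinct (concat (piles rv A))"
    "length (concat (piles rv A)) = n"
proof -
  have "length A = r" "sum_list A = n" using assms by (auto simp: weak_comps_def)
  thus 1: "set (concat (piles rv A)) = {1..n}" "distinct (concat (piles rv A))"
    using piles_prefix[of "length A" A rv] by (auto simp: piles_def S_len)
  thus "length (concat (piles rv A)) = n" by (metis card_atLeastAtMost diff_Suc_1 distinct_card)
qed

lemma map_length_piles: "map (\<lambda>L. fact (length L)) (piles rv A) = map fact A"
  by (rule nth_equalityI) (auto simp: piles_def pile_length)

lemma card_interleavings_piles:
  assumes "A \<in> weak_comps n r"
  shows "card (interleavings (piles rv A)) = multinom n A" "card (interleavings (piles rv A)) > 0"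
proof -
  have "card (interleavings (piles rv A)) * prod_list (map fact A) = fact n"
    using card_interleavings[OF piles_concat(2)[OF assms, of rv]] piles_concat(3)[OF assms, of rv]
    by (simp add: map_length_piles)
  moreover have "prod_list (map fact A) > (0::nat)"
    by (induction A) auto
  ultimately show "card (interleavings (piles rv A)) = multinom n A"
    unfolding multinom_def by (metis nonzero_mult_div_cancel_right not_less0 neq0_conv)
  show "card (interleavings (piles rv A)) > 0"
    using \<open>card (interleavings (piles rv A)) * prod_list (map fact A) = fact n\<close>
    by (metis fact_nonzero mult_is_0 neq0_conv)
qed


definition pidx :: "nat list \<Rightarrow> nat \<Rightarrow> nat" where
  "pidx A k = card {i \<in> {1..<length A}. S A i < k}"

lemma pidx_eqI:
  assumes "i < length A" "S A i < k" "k \<le> S A (Suc i)"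
  shows "pidx A k = i"
proof -
  have "{j \<in> {1..<length A}. S A j < k} = {1..i}"
  proof (intro equalityI subsetI)
    fix j assume j: "j \<in> {j \<in> {1..<length A}. S A j < k}"
    show "j \<in> {1..i}"
    proof (rule ccontr)
      assume "j \<notin> {1..i}"
      hence "Suc i \<le> j" using j by auto
      hence "S A (Suc i) \<le> S A j" by (rule S_mono)
      thus False using j assms by auto
    qed
  next
    fix j assume j: "j \<in> {1..i}"
    hence "S A j \<le> S A i" by (intro S_mono) auto
    thus "j \<in> {j \<in> {1..<length A}. S A j < k}" using j assms by auto
  qed
  thus ?thesis by (simp add: pidx_def)
qed

lemma pidx_ex:
  assumes "A \<in> weak_comps n r" "1 \<le> k" "k \<le> n"
  shows "\<exists>i < r. S A i < k \<and> k \<le> S A (Suc i)"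
proof -
  have len: "length A = r" and sum: "sum_list A = n" using assms by (auto simp: weak_comps_def)
  define j0 where "j0 = (LEAST j. k \<le> S A j)"
  have r: "k \<le> S A r" using len sum assms S_len by metis
  hence j0: "k \<le> S A j0" "j0 \<le> r" unfolding j0_def by (auto intro: LeastI Least_le)
  have "j0 \<noteq> 0" using j0 assms by (intro notI) auto
  then obtain i where i: "j0 = Suc i" using not0_implies_Suc by blast
  have "\<not> k \<le> S A i" using i unfolding j0_def by (metis lessI not_less_Least)
  thus ?thesis using i j0 by (intro exI[of _ i]) auto
qed

lemma pidx_iff:
  assumes "A \<in> weak_comps n r" "1 \<le> k" "k \<le> n" "i < r"
  shows "pidx A k = i \<longleftrightarrow> S A i < k \<and> k \<le> S A (Suc i)"
proof -
  have len: "length A = r" using assms by (auto simp: weak_comps_def)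
  obtain i' where i': "i' < r" "S A i' < k" "k \<le> S A (Suc i')" using pidx_ex[OF assms(1-3)] by blast
  have pi': "pidx A k = i'" using pidx_eqI[of i' A k] i' len by simp
  show ?thesis
  proof
    assume "pidx A k = i" thus "S A i < k \<and> k \<le> S A (Suc i)" using pi' i' by simp
  next
    assume "S A i < k \<and> k \<le> S A (Suc i)" thus "pidx A k = i" using pidx_eqI[of i A k] assms len by simp
  qed
qed

lemma pidx_lt:
  assumes "A \<in> weak_comps n r" "1 \<le> k" "k \<le> n"
  shows "pidx A k < r"
  using pidx_ex[OF assms] pidx_iff[OF assms] by blast

lemma pidx_mono: "a \<le> b \<Longrightarrow> pidx A a \<le> pidx A b"
  unfolding pidx_def by (rule card_mono) auto

definition monofs :: "nat \<Rightarrow> nat \<Rightarrow> (nat \<Rightarrow> nat) set" where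
  "monofs n r = {p \<in> {1..n} \<rightarrow>\<^sub>E {0..<r}. \<forall>a b. 1 \<le> a \<and> a \<le> b \<and> b \<le> n \<longrightarrow> p a \<le> p b}"

definition comp_of :: "nat \<Rightarrow> nat \<Rightarrow> (nat \<Rightarrow> nat) \<Rightarrow> nat list" where
  "comp_of n r p = map (\<lambda>i. card {k \<in> {1..n}. p k = i}) [0..<r]"

lemma S_comp_of: "i \<le> r \<Longrightarrow> S (comp_of n r p) i = card {k \<in> {1..n}. p k < i}"
proof (induction i)
  case 0 thus ?case by simp
next
  case (Suc i)
  have "S (comp_of n r p) (Suc i) = S (comp_of n r p) i + card {k \<in> {1..n}. p k = i}"
    using Suc.prems by (simp add: S_Suc comp_of_def)
  also have "\<dots> = card {k \<in> {1..n}. p k < i} + card {k \<in> {1..n}. p k = i}" using Suc by simp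
  also have "\<dots> = card ({k \<in> {1..n}. p k < i} \<union> {k \<in> {1..n}. p k = i})"
    by (rule card_Un_disjoint[symmetric]) auto
  also have "{k \<in> {1..n}. p k < i} \<union> {k \<in> {1..n}. p k = i} = {k \<in> {1..n}. p k < Suc i}" by auto
  finally show ?case .
qed

lemma comp_of_in: "p \<in> {1..n} \<rightarrow>\<^sub>E {0..<r} \<Longrightarrow> comp_of n r p \<in> weak_comps n r"
proof -
  assume p: "p \<in> {1..n} \<rightarrow>\<^sub>E {0..<r}"
  have "sum_list (comp_of n r p) = S (comp_of n r p) r"
    by (metis S_len comp_of_def length_map length_upt minus_nat.diff_0)
  also have "\<dots> = card {k \<in> {1..n}. p k < r}" by (rule S_comp_of) simp
  also have "{k \<in> {1..n}. p k < r} = {1..n}" using p by auto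
  finally show ?thesis by (simp add: weak_comps_def comp_of_def)
qed

lemma comp_bij:
  assumes r: "r \<ge> 1"
  shows "bij_betw (\<lambda>A. restrict (pidx A) {1..n}) (weak_comps n r) (monofs n r)"
proof (rule bij_betw_byWitness[where f'="comp_of n r"])
  show "\<forall>A\<in>weak_comps n r. comp_of n r (restrict (pidx A) {1..n}) = A"
  proof
    fix A assume A: "A \<in> weak_comps n r"
    have len: "length A = r" and sum: "sum_list A = n" using A by (auto simp: weak_comps_def)
    show "comp_of n r (restrict (pidx A) {1..n}) = A"
    proof (rule nth_equalityI)
      show "length (comp_of n r (restrict (pidx A) {1..n})) = length A" by (simp add: comp_of_def len)
      fix i assume "i < length (comp_of n r (restrict (pidx A) {1..n}))"
      hence i: "i < r" by (simp add: comp_of_def)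
      have le: "S A (Suc i) \<le> n" using S_le[OF len, of "Suc i"] sum by simp
      have "{k \<in> {1..n}. restrict (pidx A) {1..n} k = i} = {S A i <.. S A (Suc i)}"
        using pidx_iff[OF A _ _ i] le by auto
      thus "comp_of n r (restrict (pidx A) {1..n}) ! i = A ! i"
        using i len by (simp add: comp_of_def S_Suc)
    qed
  qed
  show "\<forall>p\<in>monofs n r. restrict (pidx (comp_of n r p)) {1..n} = p"
  proof
    fix p assume p: "p \<in> monofs n r"
    show "restrict (pidx (comp_of n r p)) {1..n} = p"
    proof
      fix k show "restrict (pidx (comp_of n r p)) {1..n} k = p k"
      proof (cases "k \<in> {1..n}")
        case False thus ?thesis using p by (auto simp: monofs_def)
      next
        case True
        have pk: "p k < r" using p True by (auto simp: monofs_def)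
        have "{j \<in> {1..<length (comp_of n r p)}. S (comp_of n r p) j < k} = {1..p k}"
        proof (intro equalityI subsetI)
          fix j assume j: "j \<in> {j \<in> {1..<length (comp_of n r p)}. S (comp_of n r p) j < k}"
          hence jr: "j < r" "1 \<le> j" by (auto simp: comp_of_def)
          have c: "card {k' \<in> {1..n}. p k' < j} < k" using j S_comp_of[of j r n p] jr by auto
          show "j \<in> {1..p k}"
          proof (rule ccontr)
            assume "j \<notin> {1..p k}"
            hence "p k < j" using jr by auto
            have "{1..k} \<subseteq> {k' \<in> {1..n}. p k' < j}"
            proof
              fix x assume x: "x \<in> {1..k}"
              hence "p x \<le> p k" using p True by (auto simp: monofs_def)
              thus "x \<in> {k' \<in> {1..n}. p k' < j}" using x True \<open>p k < j\<close> by auto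
            qed
            hence "card {1..k} \<le> card {k' \<in> {1..n}. p k' < j}" by (intro card_mono) auto
            thus False using c by simp
          qed
        next
          fix j assume j: "j \<in> {1..p k}"
          have "{k' \<in> {1..n}. p k' < j} \<subseteq> {1..<k}"
          proof
            fix k' assume k': "k' \<in> {k' \<in> {1..n}. p k' < j}"
            show "k' \<in> {1..<k}"
            proof (rule ccontr)
              assume "k' \<notin> {1..<k}"
              hence "k \<le> k'" using k' by auto
              hence "p k \<le> p k'" using p True k' by (auto simp: monofs_def)
              thus False using k' j by auto
            qed
          qed
          hence "card {k' \<in> {1..n}. p k' < j} \<le> card {1..<k}" by (intro card_mono) auto
          hence "S (comp_of n r p) j < k" using S_comp_of[of j r n p] j pk True by auto
          thus "j \<in> {j \<in> {1..<length (comp_of n r p)}. S (comp_of n r p) j < k}"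
            using j pk by (auto simp: comp_of_def)
        qed
        thus ?thesis using True by (simp add: pidx_def)
      qed
    qed
  qed
  show "(\<lambda>A. restrict (pidx A) {1..n}) ` weak_comps n r \<subseteq> monofs n r"
    using pidx_lt pidx_mono by (auto simp: monofs_def)
  show "comp_of n r ` monofs n r \<subseteq> weak_comps n r"
    using comp_of_in by (auto simp: monofs_def)
qed


lemma perm_list_distinct: assumes "\<pi> permutes {1..n}" shows "distinct (perm_list n \<pi>)"
proof -
  have "inj_on \<pi> X" for X using permutes_inj[OF assms] by (rule inj_on_subset) simp
  thus ?thesis unfolding perm_list_def by (simp add: distinct_map)
qed

lemma filter_perm_list_iff:
  assumes perm: "\<pi> permutes {1..n}" and dL: "distinct L" and sL: "set L \<subseteq> {1..n}"
  shows "filter (\<lambda>x. x \<in> set L) (perm_list n \<pi>) = L \<longleftrightarrow> sorted_wrt (\<lambda>x y. inv \<pi> x < inv \<pi> y) L"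
proof -
  have sp: "sorted_wrt (\<lambda>x y. inv \<pi> x < inv \<pi> y) (perm_list n \<pi>)"
    unfolding perm_list_def sorted_wrt_map
    by (rule sorted_wrt_mono_rel[OF _ sorted_wrt_upt]) (simp add: permutes_inverses(2)[OF perm])
  have sf: "sorted_wrt (\<lambda>x y. inv \<pi> x < inv \<pi> y) (filter (\<lambda>x. x \<in> set L) (perm_list n \<pi>))"
    using sorted_wrt_filter[OF sp] .
  have setf: "set (filter (\<lambda>x. x \<in> set L) (perm_list n \<pi>)) = set L"
    using sL perm_list_set[OF perm] by auto
  have inj: "inj_on (inv \<pi>) X" for X
    using permutes_inj[OF permutes_inv[OF perm]] by (rule inj_on_subset) simp
  show ?thesis
  proof
    assume "filter (\<lambda>x. x \<in> set L) (perm_list n \<pi>) = L" thus "sorted_wrt (\<lambda>x y. inv \<pi> x < inv \<pi> y) L" using sf by simp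
  next
    assume "sorted_wrt (\<lambda>x y. inv \<pi> x < inv \<pi> y) L"
    thus "filter (\<lambda>x. x \<in> set L) (perm_list n \<pi>) = L"
      by (rule sorted_unique_key[OF sf]) (use setf inj in auto)
  qed
qed

definition relR :: "(nat \<Rightarrow> nat) \<Rightarrow> bool \<Rightarrow> nat \<Rightarrow> nat \<Rightarrow> bool" where
  "relR \<sigma> b x y = (if b then \<sigma> y < \<sigma> x else \<sigma> x < \<sigma> y)"

lemma transp_relR: "transp (relR \<sigma> b)" by (cases b) (auto simp: transp_def relR_def)

lemma pile_sorted_iff:
  assumes "i < length A"
  shows "sorted_wrt (\<lambda>x y. \<sigma> x < \<sigma> y) (pile rv A i) \<longleftrightarrow>
    (\<forall>k. S A i + 1 \<le> k \<and> Suc k < S A (Suc i) + 1 \<longrightarrow> relR \<sigma> (rv i) k (Suc k))"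
proof -
  have "sorted_wrt (\<lambda>x y. \<sigma> x < \<sigma> y) (pile rv A i) = sorted_wrt (relR \<sigma> (rv i)) [S A i + 1..<S A (Suc i) + 1]"
  proof (cases "rv i")
    case True
    have "relR \<sigma> (rv i) = (\<lambda>x y. \<sigma> y < \<sigma> x)" using True by (auto simp: relR_def fun_eq_iff)
    thus ?thesis using assms True by (simp add: pile_eq sorted_wrt_rev)
  next
    case False
    have "relR \<sigma> (rv i) = (\<lambda>x y. \<sigma> x < \<sigma> y)" using False by (auto simp: relR_def fun_eq_iff)
    thus ?thesis using assms False by (simp add: pile_eq)
  qed
  also have "\<dots> = (\<forall>k. S A i + 1 \<le> k \<and> Suc k < S A (Suc i) + 1 \<longrightarrow> relR \<sigma> (rv i) k (Suc k))"
    using sorted_wrt_map_upt_adj[OF transp_relR, where g="\<lambda>x. x" and a="S A i + 1" and b="S A (Suc i) + 1"]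
    by simp
  finally show ?thesis .
qed

definition Phi :: "(nat \<Rightarrow> bool) \<Rightarrow> (nat \<Rightarrow> nat) \<Rightarrow> nat \<Rightarrow> (nat \<Rightarrow> nat) \<Rightarrow> bool" where
  "Phi rv \<sigma> n p = (\<forall>k. 1 \<le> k \<and> k < n \<longrightarrow> p k \<le> p (Suc k) \<and> (p k = p (Suc k) \<longrightarrow> relR \<sigma> (rv (p k)) k (Suc k)))"

lemma interleave_iff_Phi:
  assumes A: "A \<in> weak_comps n r" and perm: "\<pi> permutes {1..n}"
  shows "perm_list n \<pi> \<in> interleavings (piles rv A) \<longleftrightarrow> Phi rv (inv \<pi>) n (restrict (pidx A) {1..n})"
proof -
  have len: "length A = r" and sum: "sum_list A = n" using A by (auto simp: weak_comps_def)
  have Sle: "S A (Suc i) \<le> n" for i using S_le[OF len, of "Suc i"] sum by simp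
  have "perm_list n \<pi> \<in> interleavings (piles rv A) \<longleftrightarrow>
     (\<forall>L\<in>set (piles rv A). filter (\<lambda>x. x \<in> set L) (perm_list n \<pi>) = L)"
    using interleavings_char[OF piles_concat(2)[OF A, of rv]] piles_concat(1)[OF A, of rv]
      perm_list_distinct[OF perm] perm_list_set[OF perm] by auto
  also have "\<dots> \<longleftrightarrow> (\<forall>i<r. sorted_wrt (\<lambda>x y. inv \<pi> x < inv \<pi> y) (pile rv A i))"
  proof -
    have "filter (\<lambda>x. x \<in> set (pile rv A i)) (perm_list n \<pi>) = pile rv A i \<longleftrightarrow>
        sorted_wrt (\<lambda>x y. inv \<pi> x < inv \<pi> y) (pile rv A i)" if i: "i < r" for i
      using i len Sle[of i] by (intro filter_perm_list_iff[OF perm] pile_distinct) (auto simp: pile_set)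
    thus ?thesis by (auto simp: piles_def len)
  qed
  also have "\<dots> \<longleftrightarrow> (\<forall>i<r. \<forall>k. S A i + 1 \<le> k \<and> Suc k < S A (Suc i) + 1 \<longrightarrow> relR (inv \<pi>) (rv i) k (Suc k))"
    using pile_sorted_iff len by auto
  also have "\<dots> \<longleftrightarrow> Phi rv (inv \<pi>) n (restrict (pidx A) {1..n})"
  proof
    assume H: "\<forall>i<r. \<forall>k. S A i + 1 \<le> k \<and> Suc k < S A (Suc i) + 1 \<longrightarrow> relR (inv \<pi>) (rv i) k (Suc k)"
    show "Phi rv (inv \<pi>) n (restrict (pidx A) {1..n})"
      unfolding Phi_def
    proof (intro allI impI conjI)
      fix k assume k: "1 \<le> k \<and> k < n"
      show "restrict (pidx A) {1..n} k \<le> restrict (pidx A) {1..n} (Suc k)" using k pidx_mono by auto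
      assume eq: "restrict (pidx A) {1..n} k = restrict (pidx A) {1..n} (Suc k)"
      define i where "i = pidx A k"
      have i: "i < r" using pidx_lt[OF A] k i_def by auto
      have "pidx A (Suc k) = i" using eq k i_def by auto
      hence "S A i < k" "Suc k \<le> S A (Suc i)" using pidx_iff[OF A, of k i] pidx_iff[OF A, of "Suc k" i] i k i_def by auto
      hence "relR (inv \<pi>) (rv i) k (Suc k)" using H i by auto
      thus "relR (inv \<pi>) (rv (restrict (pidx A) {1..n} k)) k (Suc k)" using k i_def by auto
    qed
  next
    assume H: "Phi rv (inv \<pi>) n (restrict (pidx A) {1..n})"
    show "\<forall>i<r. \<forall>k. S A i + 1 \<le> k \<and> Suc k < S A (Suc i) + 1 \<longrightarrow> relR (inv \<pi>) (rv i) k (Suc k)"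
    proof (intro allI impI)
      fix i k assume i: "i < r" and k: "S A i + 1 \<le> k \<and> Suc k < S A (Suc i) + 1"
      have kn: "1 \<le> k" "k < n" using k Sle[of i] by auto
      have "pidx A k = i" "pidx A (Suc k) = i" using pidx_iff[OF A, of k i] pidx_iff[OF A, of "Suc k" i] i k kn by auto
      thus "relR (inv \<pi>) (rv i) k (Suc k)" using H kn unfolding Phi_def by auto
    qed
  qed
  finally show ?thesis .
qed



lemma finite_weak_comps: "finite (weak_comps n r)"
proof -
  have "weak_comps n r \<subseteq> {xs. set xs \<subseteq> {0..n} \<and> length xs = r}"
    by (auto simp: weak_comps_def dest: member_le_sum_list)
  moreover have "finite {xs. set xs \<subseteq> {0..n} \<and> length xs = r}"
    by (rule finite_lists_length_eq) simp
  ultimately show ?thesis by (rule finite_subset)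
qed

lemma riffle_count:
  assumes r: "r \<ge> 1"
  shows "riffle_prob r rv n \<pi> = real (card {A \<in> weak_comps n r. perm_list n \<pi> \<in> interleavings (piles rv A)}) / real r ^ n"
proof -
  have "riffle_prob r rv n \<pi> = (\<Sum>A\<in>weak_comps n r. if perm_list n \<pi> \<in> interleavings (piles rv A) then 1 / real r ^ n else 0)"
    unfolding riffle_prob_def
  proof (rule sum.cong[OF refl])
    fix A assume A: "A \<in> weak_comps n r"
    have c: "real (card (interleavings (piles rv A))) = real (multinom n A)" "real (multinom n A) > 0"
      using card_interleavings_piles[OF A, of rv] by auto
    show "real (multinom n A) / real r ^ n *
         ((if perm_list n \<pi> \<in> interleavings (piles rv A) then 1 else 0) / real (card (interleavings (piles rv A)))) =
         (if perm_list n \<pi> \<in> interleavings (piles rv A) then 1 / real r ^ n else 0)"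
      using c by auto
  qed
  also have "\<dots> = (\<Sum>A\<in>{A \<in> weak_comps n r. perm_list n \<pi> \<in> interleavings (piles rv A)}. 1 / real r ^ n)"
    by (rule sum.inter_filter[symmetric, OF finite_weak_comps])
  also have "\<dots> = real (card {A \<in> weak_comps n r. perm_list n \<pi> \<in> interleavings (piles rv A)}) / real r ^ n"
    by simp
  finally show ?thesis .
qed

lemma Phi_mono:
  assumes "Phi rv \<sigma> n p" "1 \<le> a" "a \<le> b" "b \<le> n"
  shows "p a \<le> p b"
  using assms(3,4)
proof (induction b)
  case 0 thus ?case using assms(2) by simp
next
  case (Suc b)
  show ?case
  proof (cases "a = Suc b")
    case True thus ?thesis by simp
  next
    case False
    hence "a \<le> b" using Suc by simp
    hence "p a \<le> p b" using Suc by simp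
    moreover have "p b \<le> p (Suc b)" using assms(1,2) \<open>a \<le> b\<close> Suc.prems unfolding Phi_def by auto
    ultimately show ?thesis by simp
  qed
qed

lemma val_prec:
  fixes val :: "nat \<Rightarrow> int" and a b r :: nat
  assumes H1: "\<forall>a<r. \<forall>b<r. zrank (val a) < zrank (val b) \<longleftrightarrow> a < b"
    and H2: "\<forall>a<r. val a < 0 \<longleftrightarrow> rv a" and ab: "a < r" "b < r"
  shows "prec_plus (val a) (val b) \<longleftrightarrow> a < b \<or> (a = b \<and> \<not> rv a)"
    "prec_minus (val a) (val b) \<longleftrightarrow> a < b \<or> (a = b \<and> rv a)"
proof -
  have z: "zrank (val a) < zrank (val b) \<longleftrightarrow> a < b" using H1 ab by blast
  have z2: "zrank (val b) < zrank (val a) \<longleftrightarrow> b < a" using H1 ab by blast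
  have ng: "val a < 0 \<longleftrightarrow> rv a" using H2 ab by blast
  have eq: "val a = val b \<longleftrightarrow> a = b"
  proof
    assume "val a = val b"
    hence "\<not> a < b" "\<not> b < a" using z z2 by auto
    thus "a = b" by linarith
  qed simp
  show "prec_plus (val a) (val b) \<longleftrightarrow> a < b \<or> (a = b \<and> \<not> rv a)"
    unfolding prec_plus_def zless_def z eq using ng by auto
  show "prec_minus (val a) (val b) \<longleftrightarrow> a < b \<or> (a = b \<and> rv a)"
    unfolding prec_minus_def zless_def z eq using ng by auto
qed

lemma riffle_card:
  assumes perm: "\<pi> permutes {1..n}" and r: "r \<ge> 1"
   and H1: "\<forall>a<r. \<forall>b<r. zrank (val a) < zrank (val b) \<longleftrightarrow> a < b"
   and H2: "\<forall>a<r. val a < 0 \<longleftrightarrow> rv a"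
   and H3: "val ` {0..<r} = V"
  shows "card {A \<in> weak_comps n r. perm_list n \<pi> \<in> interleavings (piles rv A)} =
         card {f \<in> {1..n} \<rightarrow>\<^sub>E V. is_pi_partition n (inv \<pi>) f}"
proof -
  let ?\<sigma> = "inv \<pi>"
  have "{A \<in> weak_comps n r. perm_list n \<pi> \<in> interleavings (piles rv A)} =
        {A \<in> weak_comps n r. Phi rv ?\<sigma> n (restrict (pidx A) {1..n})}"
    using interleave_iff_Phi[OF _ perm] by blast
  hence "card {A \<in> weak_comps n r. perm_list n \<pi> \<in> interleavings (piles rv A)} =
         card {p \<in> monofs n r. Phi rv ?\<sigma> n p}"
    using card_bij_filter[OF comp_bij[OF r], of n "Phi rv ?\<sigma> n"] by simp
  also have "{p \<in> monofs n r. Phi rv ?\<sigma> n p} = {p \<in> {1..n} \<rightarrow>\<^sub>E {0..<r}. Phi rv ?\<sigma> n p}"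
    unfolding monofs_def using Phi_mono by blast
  also have "card \<dots> = card {f \<in> {1..n} \<rightarrow>\<^sub>E V. is_pi_partition n ?\<sigma> f}"
  proof -
    have inj: "inj_on val {0..<r}"
    proof (rule inj_onI)
      fix a b assume ab: "a \<in> {0..<r}" "b \<in> {0..<r}" "val a = val b"
      hence ar: "a < r" "b < r" by auto
      have "\<not> a < b" "\<not> b < a"
        using H1[rule_format, OF ar(1) ar(2)] H1[rule_format, OF ar(2) ar(1)] ab(3) by auto
      thus "a = b" by linarith
    qed
    have bij: "bij_betw (\<lambda>p. restrict (\<lambda>x. val (p (\<pi> x))) {1..n}) ({1..n} \<rightarrow>\<^sub>E {0..<r}) ({1..n} \<rightarrow>\<^sub>E V)"
      by (rule bij_PiE_gen[OF permutes_imp_bij[OF perm] inj H3])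
    have "{p \<in> {1..n} \<rightarrow>\<^sub>E {0..<r}. Phi rv ?\<sigma> n p} =
          {p \<in> {1..n} \<rightarrow>\<^sub>E {0..<r}. is_pi_partition n ?\<sigma> (restrict (\<lambda>x. val (p (\<pi> x))) {1..n})}"
    proof (intro Collect_cong conj_cong refl)
      fix p assume p: "p \<in> {1..n} \<rightarrow>\<^sub>E {0..<r}"
      have sig: "?\<sigma> i \<in> {1..n}" "\<pi> (?\<sigma> i) = i" if "i \<in> {1..n}" for i
        using that permutes_in_image[OF permutes_inv[OF perm]] permutes_inverses(1)[OF perm] by auto
      have sinj: "?\<sigma> i \<noteq> ?\<sigma> j" if "i \<noteq> j" for i j
        using that permutes_inj[OF permutes_inv[OF perm]] by (auto dest: injD)
      have pr: "p i < r" if "i \<in> {1..n}" for i using p that by auto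
      show "Phi rv ?\<sigma> n p \<longleftrightarrow> is_pi_partition n ?\<sigma> (restrict (\<lambda>x. val (p (\<pi> x))) {1..n})"
        unfolding Phi_def is_pi_partition_def
      proof (intro iff_allI)
        fix k
        show "(1 \<le> k \<and> k < n \<longrightarrow> p k \<le> p (Suc k) \<and> (p k = p (Suc k) \<longrightarrow> relR ?\<sigma> (rv (p k)) k (Suc k))) \<longleftrightarrow>
          (1 \<le> k \<and> k < n \<longrightarrow>
            (?\<sigma> k < ?\<sigma> (k + 1) \<longrightarrow> prec_plus (restrict (\<lambda>x. val (p (\<pi> x))) {1..n} (?\<sigma> k)) (restrict (\<lambda>x. val (p (\<pi> x))) {1..n} (?\<sigma> (k + 1)))) \<and>
            (?\<sigma> (k + 1) < ?\<sigma> k \<longrightarrow> prec_minus (restrict (\<lambda>x. val (p (\<pi> x))) {1..n} (?\<sigma> k)) (restrict (\<lambda>x. val (p (\<pi> x))) {1..n} (?\<sigma> (k + 1)))))"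
        proof (cases "1 \<le> k \<and> k < n")
          case False thus ?thesis by blast
        next
          case True
          hence k: "k \<in> {1..n}" "Suc k \<in> {1..n}" by auto
          have ne: "?\<sigma> k \<noteq> ?\<sigma> (Suc k)" using sinj by simp
          have r1: "restrict (\<lambda>x. val (p (\<pi> x))) {1..n} (?\<sigma> k) = val (p k)" using sig[OF k(1)] by simp
          have r2: "restrict (\<lambda>x. val (p (\<pi> x))) {1..n} (?\<sigma> (k+1)) = val (p (Suc k))" using sig[OF k(2)] by simp
          note vp = val_prec[OF H1 H2 pr[OF k(1)] pr[OF k(2)]]
          show ?thesis unfolding r1 r2 vp relR_def using True ne
            by (cases "?\<sigma> k < ?\<sigma> (Suc k)") auto
        qed
      qed
    qed
    thus ?thesis using card_bij_filter[OF bij, of "is_pi_partition n ?\<sigma>"] by simp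
  qed
  finally show ?thesis .
qed



lemma val_facts:
  fixes val :: "nat \<Rightarrow> int" and V :: "int set"
  assumes zr: "\<And>i. i < r \<Longrightarrow> zrank (val i) = c * i + d" and c: "c > 0"
    and sub: "\<And>i. i < r \<Longrightarrow> val i \<in> V" and fin: "finite V" and cardV: "card V = r"
  shows "\<forall>a<r. \<forall>b<r. zrank (val a) < zrank (val b) \<longleftrightarrow> a < b" "val ` {0..<r} = V"
proof -
  show H1: "\<forall>a<r. \<forall>b<r. zrank (val a) < zrank (val b) \<longleftrightarrow> a < b"
    using zr c by simp
  have inj: "inj_on val {0..<r}"
  proof (rule inj_onI)
    fix a b assume ab: "a \<in> {0..<r}" "b \<in> {0..<r}" "val a = val b"
    hence ar: "a < r" "b < r" by auto
    have "\<not> a < b" "\<not> b < a"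
      using H1[rule_format, OF ar(1) ar(2)] H1[rule_format, OF ar(2) ar(1)] ab(3) by auto
    thus "a = b" by linarith
  qed
  show "val ` {0..<r} = V"
  proof (rule card_subset_eq[OF fin])
    show "val ` {0..<r} \<subseteq> V" using sub by auto
    show "card (val ` {0..<r}) = card V" using card_image[OF inj] cardV by simp
  qed
qed

definition val_l :: "nat \<Rightarrow> int" where "val_l i = (if odd i then - int ((i+1) div 2) else int (i div 2))"
definition val_s :: "nat \<Rightarrow> int" where "val_s i = (if even i then - int (i div 2 + 1) else int ((i+1) div 2))"
definition val_p :: "nat \<Rightarrow> int" where "val_p i = int i + 1"

lemma val_l_facts: "zrank (val_l i) = 1 * i + 0" "val_l i < 0 \<longleftrightarrow> odd i"
  "i < 2*m+1 \<Longrightarrow> val_l i \<in> {-int m..int m}"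
proof -
  have "zrank (val_l i) = i \<and> (val_l i < 0 \<longleftrightarrow> odd i) \<and> (i < 2*m+1 \<longrightarrow> val_l i \<in> {-int m..int m})"
  proof (cases "odd i")
    case True
    then obtain t where t: "i = 2*t+1" using oddE by blast
    have "val_l i = - int (Suc t)" using t by (simp add: val_l_def)
    thus ?thesis using t zrank_neg[of t] by auto
  next
    case False
    then obtain t where t: "i = 2*t" using evenE by blast
    have "val_l i = int t" using t by (simp add: val_l_def)
    thus ?thesis using t zrank_pos[of t] by auto
  qed
  thus "zrank (val_l i) = 1 * i + 0" "val_l i < 0 \<longleftrightarrow> odd i" "i < 2*m+1 \<Longrightarrow> val_l i \<in> {-int m..int m}"
    by auto
qed

lemma val_s_facts: "zrank (val_s i) = 1 * i + 1" "val_s i < 0 \<longleftrightarrow> even i"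
  "i < 2*m \<Longrightarrow> val_s i \<in> {-int m..int m} - {0}"
proof -
  have "zrank (val_s i) = i + 1 \<and> (val_s i < 0 \<longleftrightarrow> even i) \<and> (i < 2*m \<longrightarrow> val_s i \<in> {-int m..int m} - {0})"
  proof (cases "even i")
    case True
    then obtain t where t: "i = 2*t" using evenE by blast
    have "val_s i = - int (Suc t)" using t by (simp add: val_s_def)
    thus ?thesis using t zrank_neg[of t] by auto
  next
    case False
    then obtain t where t: "i = 2*t+1" using oddE by blast
    have "val_s i = int (Suc t)" using t by (simp add: val_s_def)
    thus ?thesis using t zrank_pos[of "Suc t"] by auto
  qed
  thus "zrank (val_s i) = 1 * i + 1" "val_s i < 0 \<longleftrightarrow> even i" "i < 2*m \<Longrightarrow> val_s i \<in> {-int m..int m} - {0}"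
    by auto
qed

lemma val_p_facts: "zrank (val_p i) = 2 * i + 2" "\<not> val_p i < 0"
  "i < m \<Longrightarrow> val_p i \<in> {1..int m}"
proof -
  have "val_p i = int (Suc i)" by (simp add: val_p_def)
  thus "zrank (val_p i) = 2 * i + 2" "\<not> val_p i < 0" "i < m \<Longrightarrow> val_p i \<in> {1..int m}"
    using zrank_pos[of "Suc i"] by auto
qed

lemma card_V: "card {-int m..int m} = 2*m+1" "card ({-int m..int m} - {0}) = 2*m" "card {1..int m} = m"
  by auto


lemma lazy_opts_ok: "p \<in> lazy_opts m \<Longrightarrow> fst p \<le> m \<and> p \<noteq> (0,True)"
  by (auto simp: lazy_opts_def)
lemma std_opts_ok: "p \<in> std_opts m \<Longrightarrow> fst p \<le> m \<and> p \<noteq> (0,True)"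
  by (auto simp: std_opts_def)
lemma strict_opts_ok: "p \<in> strict_opts m \<Longrightarrow> fst p \<le> m \<and> p \<noteq> (0,True)"
  by (auto simp: strict_opts_def)

lemma enc_img_aux:
  assumes "v \<in> {-int m..int m}"
  shows "v > 0 \<Longrightarrow> (nat v, False) \<in> {1..m} \<times> UNIV \<and> enc (nat v, False) = v"
    "v < 0 \<Longrightarrow> (nat (-v), True) \<in> {1..m} \<times> UNIV \<and> enc (nat (-v), True) = v"
  using assms by (auto simp: enc_def)

lemma enc_lazy: "enc ` lazy_opts m = {-int m..int m}"
proof
  show "enc ` lazy_opts m \<subseteq> {-int m..int m}" by (auto simp: lazy_opts_def enc_def)
  show "{-int m..int m} \<subseteq> enc ` lazy_opts m"
  proof
    fix v assume v: "v \<in> {-int m..int m}"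
    consider "v = 0" | "v > 0" | "v < 0" by linarith
    thus "v \<in> enc ` lazy_opts m"
    proof cases
      case 1 thus ?thesis by (force simp: lazy_opts_def enc_def)
    next
      case 2 thus ?thesis using enc_img_aux(1)[OF v] unfolding lazy_opts_def by (metis UnI2 image_eqI)
    next
      case 3 thus ?thesis using enc_img_aux(2)[OF v] unfolding lazy_opts_def by (metis UnI2 image_eqI)
    qed
  qed
qed

lemma enc_std: "enc ` std_opts m = {-int m..int m} - {0}"
proof
  show "enc ` std_opts m \<subseteq> {-int m..int m} - {0}" by (auto simp: std_opts_def enc_def)
  show "{-int m..int m} - {0} \<subseteq> enc ` std_opts m"
  proof
    fix v assume v0: "v \<in> {-int m..int m} - {0}"
    hence v: "v \<in> {-int m..int m}" by simp
    have "v \<noteq> 0" using v0 by simp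
    then consider "v > 0" | "v < 0" by linarith
    thus "v \<in> enc ` std_opts m"
    proof cases
      case 1 thus ?thesis using enc_img_aux(1)[OF v] unfolding std_opts_def by (metis image_eqI)
    next
      case 2 thus ?thesis using enc_img_aux(2)[OF v] unfolding std_opts_def by (metis image_eqI)
    qed
  qed
qed

lemma enc_strict: "enc ` strict_opts m = {1..int m}"
proof
  show "enc ` strict_opts m \<subseteq> {1..int m}" by (auto simp: strict_opts_def enc_def)
  show "{1..int m} \<subseteq> enc ` strict_opts m"
  proof
    fix v assume v: "v \<in> {1..int m}"
    hence "(nat v, False) \<in> strict_opts m" "enc (nat v, False) = v" by (auto simp: strict_opts_def enc_def)
    thus "v \<in> enc ` strict_opts m" by (metis image_eqI)
  qed
qed

lemma card_opts: "card (lazy_opts m) = 2*m+1" "card (std_opts m) = 2*m" "card (strict_opts m) = m"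
proof -
  have c: "card ({1..m} \<times> (UNIV :: bool set)) = 2*m" by (simp add: card_cartesian_product)
  show "card (std_opts m) = 2*m" using c by (simp add: std_opts_def)
  show "card (lazy_opts m) = 2*m+1" using c unfolding lazy_opts_def
    by (subst card_Un_disjoint) auto
  show "card (strict_opts m) = m" by (simp add: strict_opts_def card_cartesian_product)
qed

theorem proposition3p6:
  fixes n m :: nat and \<pi> :: "nat \<Rightarrow> nat"
  assumes "n \<ge> 1" and "m \<ge> 1" and "\<pi> permutes {1..n}"
  shows "x_lazy n m \<pi> = real (Omega n \<pi> m) / real (2*m+1) ^ n \<and>
         x_std n m \<pi> = real (Omega_star n \<pi> m) / real (2*m) ^ n \<and>
         x_strict n m \<pi> = real (Omega_plus n \<pi> m) / real m ^ n \<and>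
         y_lazy n m \<pi> = x_lazy n m (inv \<pi>) \<and>
         y_star n m \<pi> = x_std n m (inv \<pi>) \<and>
         y_plus n m \<pi> = x_strict n m (inv \<pi>)"
proof -
  have perm: "\<pi> permutes {1..n}" by fact
  have perm': "inv \<pi> permutes {1..n}" by (rule permutes_inv[OF perm])
  have xl: "x_lazy n m \<sigma> = real (Omega n \<sigma> m) / real (2*m+1) ^ n" if s: "\<sigma> permutes {1..n}" for \<sigma>
    unfolding x_lazy_def shelf_prob_def Omega_def card_opts
    using shelf_count[OF lazy_opts_ok s enc_lazy] by simp
  have xs: "x_std n m \<sigma> = real (Omega_star n \<sigma> m) / real (2*m) ^ n" if s: "\<sigma> permutes {1..n}" for \<sigma>
    unfolding x_std_def shelf_prob_def Omega_star_def card_opts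
    using shelf_count[OF std_opts_ok s enc_std] by simp
  have xp: "x_strict n m \<sigma> = real (Omega_plus n \<sigma> m) / real m ^ n" if s: "\<sigma> permutes {1..n}" for \<sigma>
    unfolding x_strict_def shelf_prob_def Omega_plus_def card_opts
    using shelf_count[OF strict_opts_ok s enc_strict] by simp
  have yl: "y_lazy n m \<pi> = x_lazy n m (inv \<pi>)"
  proof -
    have r: "2*m+1 \<ge> 1" by simp
    have zr: "\<And>i. i < 2*m+1 \<Longrightarrow> zrank (val_l i) = 1 * i + 0" by (rule val_l_facts(1))
    have sub: "\<And>i. i < 2*m+1 \<Longrightarrow> val_l i \<in> {-int m..int m}" by (rule val_l_facts(3))
    have c0: "(0::nat) < 1" by simp
    note vf = val_facts[OF zr c0 sub finite_atLeastAtMost_int card_V(1)]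
    have h2: "\<forall>a<2*m+1. val_l a < 0 \<longleftrightarrow> odd a" by (simp add: val_l_facts)
    show ?thesis unfolding y_lazy_def riffle_count[OF r] xl[OF perm'] Omega_def
      using riffle_card[OF perm r vf(1) h2 vf(2)] by simp
  qed
  have ys: "y_star n m \<pi> = x_std n m (inv \<pi>)"
  proof -
    have r: "2*m \<ge> 1" using assms by simp
    have zr: "\<And>i. i < 2*m \<Longrightarrow> zrank (val_s i) = 1 * i + 1" by (rule val_s_facts(1))
    have sub: "\<And>i. i < 2*m \<Longrightarrow> val_s i \<in> {-int m..int m} - {0}" by (rule val_s_facts(3))
    have c0: "(0::nat) < 1" by simp
    note vf = val_facts[OF zr c0 sub finite_Diff[OF finite_atLeastAtMost_int] card_V(2)]
    have h2: "\<forall>a<2*m. val_s a < 0 \<longleftrightarrow> even a" by (simp add: val_s_facts)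
    show ?thesis unfolding y_star_def riffle_count[OF r] xs[OF perm'] Omega_star_def
      using riffle_card[OF perm r vf(1) h2 vf(2)] by simp
  qed
  have yp: "y_plus n m \<pi> = x_strict n m (inv \<pi>)"
  proof -
    have r: "m \<ge> 1" using assms by simp
    have zr: "\<And>i. i < m \<Longrightarrow> zrank (val_p i) = 2 * i + 2" by (rule val_p_facts(1))
    have sub: "\<And>i. i < m \<Longrightarrow> val_p i \<in> {1..int m}" by (rule val_p_facts(3))
    have c0: "(0::nat) < 2" by simp
    note vf = val_facts[OF zr c0 sub finite_atLeastAtMost_int card_V(3)]
    have h2: "\<forall>a<m. val_p a < 0 \<longleftrightarrow> False" by (simp add: val_p_facts)
    show ?thesis unfolding y_plus_def riffle_count[OF r] xp[OF perm'] Omega_plus_def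
      using riffle_card[OF perm r vf(1) h2 vf(2)] by simp
  qed
  show ?thesis using xl[OF perm] xs[OF perm] xp[OF perm] yl ys yp by blast
qed

end
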